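(* For every integer $k\ge 6$, there are infinitely many (pairwise non-isomorphic) $k$-vertex-critical graphs that are both $P_5$-free and $C_5$-free.
   Context: $\chi(G)$ denotes the chromatic number of $G$. A graph $G$ is $k$-vertex-critical if $\chi(G)=k$ and $\chi(G-v)<k$ for every vertex $v$ of $G$. $P_5$ is the path on five vertices and $C_5$ is the 5-cycle. A graph is $H$-free if it contains no induced subgraph isomorphic to $H$. *)

theory Defs
  imports Main
begin

type_synonym 'a sgraph = "'a set \<times> 'a set set"

definition verts :: "'a sgraph \<Rightarrow> 'a set" where "verts G = fst G"
definition edges :: "'a sgraph \<Rightarrow> 'a set set" where "edges G = snd G"

definition is_graph :: "'a sgraph \<Rightarrow> bool" where
  "is_graph G \<longleftrightarrow> finite (verts G) \<and>
     (\<forall>e\<in>edges G. \<exists>u v. u \<in> verts G \<and> v \<in> verts G \<and> u \<noteq> v \<and> e = {u, v})"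

definition colorable :: "'a sgraph \<Rightarrow> nat \<Rightarrow> bool" where
  "colorable G k \<longleftrightarrow> (\<exists>c :: 'a \<Rightarrow> nat. (\<forall>v\<in>verts G. c v < k) \<and>
     (\<forall>u\<in>verts G. \<forall>v\<in>verts G. {u, v} \<in> edges G \<longrightarrow> c u \<noteq> c v))"

definition chromatic_number :: "'a sgraph \<Rightarrow> nat" where
  "chromatic_number G = (LEAST k. colorable G k)"

definition delete_vertex :: "'a sgraph \<Rightarrow> 'a \<Rightarrow> 'a sgraph" where
  "delete_vertex G v = (verts G - {v}, {e \<in> edges G. v \<notin> e})"

definition vertex_critical :: "nat \<Rightarrow> 'a sgraph \<Rightarrow> bool" where
  "vertex_critical k G \<longleftrightarrow> is_graph G \<and> chromatic_number G = k \<and>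
     (\<forall>v\<in>verts G. chromatic_number (delete_vertex G v) < k)"

definition induced_sub :: "'b sgraph \<Rightarrow> 'a sgraph \<Rightarrow> bool" where
  "induced_sub H G \<longleftrightarrow> (\<exists>f. inj_on f (verts H) \<and> f ` verts H \<subseteq> verts G \<and>
     (\<forall>u\<in>verts H. \<forall>v\<in>verts H. ({f u, f v} \<in> edges G \<longleftrightarrow> {u, v} \<in> edges H)))"

definition H_free :: "'b sgraph \<Rightarrow> 'a sgraph \<Rightarrow> bool" where
  "H_free H G \<longleftrightarrow> \<not> induced_sub H G"

definition P5 :: "nat sgraph" where
  "P5 = ({0..<5}, {{i, i + 1} | i. i < 4})"

definition C5 :: "nat sgraph" where
  "C5 = ({0..<5}, {{i, (i + 1) mod 5} | i. i < 5})"

definition graph_iso :: "'a sgraph \<Rightarrow> 'b sgraph \<Rightarrow> bool" where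
  "graph_iso G H \<longleftrightarrow> (\<exists>f. bij_betw f (verts G) (verts H) \<and>
     (\<forall>u\<in>verts G. \<forall>v\<in>verts G. ({f u, f v} \<in> edges H \<longleftrightarrow> {u, v} \<in> edges G)))"

end

theory Submission
  imports Defs
begin

definition near :: "nat \<Rightarrow> nat \<Rightarrow> nat \<Rightarrow> bool" where
 "near p i j \<longleftrightarrow> (i \<le> j + p \<and> j \<le> i + p) \<or> i + (5*p+6) \<le> j + p \<or> j + (5*p+6) \<le> i + p"

lemma near_sym: "near p i j = near p j i"
  unfolding near_def by auto

lemma no2K2: "a < 5*p+6 \<Longrightarrow> b < 5*p+6 \<Longrightarrow> c < 5*p+6 \<Longrightarrow> d < 5*p+6 \<Longrightarrow>
  a \<noteq> b \<Longrightarrow> c \<noteq> d \<Longrightarrow> \<not> near p a b \<Longrightarrow> \<not> near p c d \<Longrightarrow> near p a c \<Longrightarrow> near p a d \<Longrightarrow> near p b c \<Longrightarrow> near p b d \<Longrightarrow> False"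
  unfolding near_def not_le de_Morgan_disj de_Morgan_conj
  by (elim disjE conjE; linarith)

lemma near_lin: "i \<le> j + p \<Longrightarrow> j \<le> i + p \<Longrightarrow> near p i j" unfolding near_def by simp

lemma noC5_min: "a < 5*p+6 \<Longrightarrow> b < 5*p+6 \<Longrightarrow> c < 5*p+6 \<Longrightarrow> d < 5*p+6 \<Longrightarrow> e < 5*p+6 \<Longrightarrow>
  a \<le> b \<Longrightarrow> a \<le> c \<Longrightarrow> a \<le> d \<Longrightarrow> a \<le> e \<Longrightarrow>
  \<not> near p a b \<Longrightarrow> \<not> near p b c \<Longrightarrow> \<not> near p c d \<Longrightarrow> \<not> near p d e \<Longrightarrow> \<not> near p e a \<Longrightarrow>
  near p a c \<Longrightarrow> near p b d \<Longrightarrow> near p c e \<Longrightarrow> near p d a \<Longrightarrow> near p e b \<Longrightarrow> False"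
proof -
  assume h: "a < 5*p+6" "b < 5*p+6" "c < 5*p+6" "d < 5*p+6" "e < 5*p+6"
    "a \<le> b" "a \<le> c" "a \<le> d" "a \<le> e"
    "\<not> near p a b" "\<not> near p b c" "\<not> near p c d" "\<not> near p d e" "\<not> near p e a"
    "near p a c" "near p b d" "near p c e" "near p d a" "near p e b"
  have ab: "a + p < b \<and> b + p < a + (5*p+6)" using h(6,10) unfolding near_def by linarith
  have ae: "a + p < e \<and> e + p < a + (5*p+6)" using h(9,14) unfolding near_def by linarith
  have ac: "c \<le> a + p \<or> a + (5*p+6) \<le> c + p" using h(7,15) unfolding near_def by linarith
  have ad: "d \<le> a + p \<or> a + (5*p+6) \<le> d + p" using h(8,18) unfolding near_def by linarith
  show False
  proof (cases "c \<le> a + p")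
    case cl: True
    show False
    proof (cases "d \<le> a + p")
      case True
      then have "near p c d" using cl h(7,8) by (intro near_lin) linarith+
      then show False using h(12) by simp
    next
      case False
      then have dh: "a + (5*p+6) \<le> d + p" using ad by simp
      have "d \<le> b + p" using h(16) ab dh h(2,4) unfolding near_def by (elim disjE conjE; linarith)
      moreover have "e \<le> c + p" using h(17) ae cl h(3,5,7) unfolding near_def by (elim disjE conjE; linarith)
      ultimately show False using h(19) ab ae cl dh h(2,5) unfolding near_def by (elim disjE conjE; linarith)
    qed
  next
    case ch: False
    then have ch: "a + (5*p+6) \<le> c + p" using ac by simp
    show False
    proof (cases "d \<le> a + p")
      case dl: True
      have "b \<le> d + p" using h(16) ab dl h(2,4,8) unfolding near_def by (elim disjE conjE; linarith)
      moreover have "c \<le> e + p" using h(17) ae ch h(3,5) unfolding near_def by (elim disjE conjE; linarith)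
      ultimately show False using h(19) ab ae ch dl h(2,5) unfolding near_def by (elim disjE conjE; linarith)
    next
      case False
      then have dh: "a + (5*p+6) \<le> d + p" using ad by simp
      have "near p c d" using ch dh h(3,4) by (intro near_lin) linarith+
      then show False using h(12) by simp
    qed
  qed
qed

lemma noC5: "a < 5*p+6 \<Longrightarrow> b < 5*p+6 \<Longrightarrow> c < 5*p+6 \<Longrightarrow> d < 5*p+6 \<Longrightarrow> e < 5*p+6 \<Longrightarrow>
  \<not> near p a b \<Longrightarrow> \<not> near p b c \<Longrightarrow> \<not> near p c d \<Longrightarrow> \<not> near p d e \<Longrightarrow> \<not> near p e a \<Longrightarrow>
  near p a c \<Longrightarrow> near p b d \<Longrightarrow> near p c e \<Longrightarrow> near p d a \<Longrightarrow> near p e b \<Longrightarrow> False"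
proof -
  assume h: "a < 5*p+6" "b < 5*p+6" "c < 5*p+6" "d < 5*p+6" "e < 5*p+6"
    "\<not> near p a b" "\<not> near p b c" "\<not> near p c d" "\<not> near p d e" "\<not> near p e a"
    "near p a c" "near p b d" "near p c e" "near p d a" "near p e b"
  consider "a \<le> b \<and> a \<le> c \<and> a \<le> d \<and> a \<le> e" | "b \<le> a \<and> b \<le> c \<and> b \<le> d \<and> b \<le> e"
    | "c \<le> a \<and> c \<le> b \<and> c \<le> d \<and> c \<le> e" | "d \<le> a \<and> d \<le> b \<and> d \<le> c \<and> d \<le> e"
    | "e \<le> a \<and> e \<le> b \<and> e \<le> c \<and> e \<le> d" by linarith
  then show False
  proof cases
    case 1 then show ?thesis using noC5_min[of a p b c d e] h by blast
  next
    case 2 then show ?thesis using noC5_min[of b p c d e a] h near_sym by blast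
  next
    case 3 then show ?thesis using noC5_min[of c p d e a b] h near_sym by blast
  next
    case 4 then show ?thesis using noC5_min[of d p e a b c] h near_sym by blast
  next
    case 5 then show ?thesis using noC5_min[of e p a b c d] h near_sym by blast
  qed
qed

definition gE :: "nat \<Rightarrow> nat \<Rightarrow> nat \<Rightarrow> nat \<Rightarrow> bool" where
  "gE p r i j \<longleftrightarrow> i \<noteq> j \<and> i < 5*p+6+r \<and> j < 5*p+6+r \<and>
     (5*p+6 \<le> i \<or> 5*p+6 \<le> j \<or> \<not> near p i j)"

lemma gE_sym: "gE p r i j = gE p r j i"
  unfolding gE_def using near_sym by blast

definition Gr :: "nat \<Rightarrow> nat \<Rightarrow> nat sgraph" where
  "Gr p r = ({0..<5*p+6+r}, {{i, j} | i j. gE p r i j})"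

lemma verts_Gr[simp]: "verts (Gr p r) = {0..<5*p+6+r}"
  by (simp add: Gr_def verts_def)

lemma edge_Gr: "{x, y} \<in> edges (Gr p r) \<longleftrightarrow> gE p r x y"
proof
  assume "{x, y} \<in> edges (Gr p r)"
  then obtain i j where "{x, y} = {i, j}" "gE p r i j"
    by (auto simp: Gr_def edges_def)
  then show "gE p r x y" using gE_sym by (metis doubleton_eq_iff)
next
  assume "gE p r x y"
  then show "{x, y} \<in> edges (Gr p r)" by (auto simp: Gr_def edges_def)
qed

lemma is_graph_Gr: "is_graph (Gr p r)"
  unfolding is_graph_def
  by (auto simp: Gr_def edges_def verts_def gE_def)

lemma colorable_mono: "colorable G k \<Longrightarrow> k \<le> k' \<Longrightarrow> colorable G k'"
  unfolding colorable_def by (meson order_less_le_trans)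

lemma div_eq_close:
  fixes i j q :: nat
  assumes "q > 0" "i div q = j div q"
  shows "i < j + q"
proof -
  have e: "i div q * q = j div q * q" using assms(2) by simp
  show ?thesis using div_mult_mod_eq[of i q] div_mult_mod_eq[of j q] mod_less_divisor[OF assms(1), of i] e
    by linarith
qed

lemma div5: "(5*p+5) div (p+1) = (5::nat)"
proof -
  have "5*p+5 = (p+1)*(5::nat)" by simp
  then show ?thesis by (metis nonzero_mult_div_cancel_left add_is_0 one_neq_zero)
qed

lemma col_upper: "colorable (Gr p r) (6 + r)"
proof -
  let ?n = "5*p+6"
  define c where "c i = (if i < ?n then i div (p+1) else i - ?n + 6)" for i
  have r1: "c v < 6 + r" if "v \<in> verts (Gr p r)" for v
  proof (cases "v < ?n")
    case True
    then have "v div (p+1) \<le> (5*p+5) div (p+1)" by (intro div_le_mono) simp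
    also have "(5*p+5) div (p+1) = 5" 
      using div5 .
    finally show ?thesis using True by (simp add: c_def)
  next
    case False
    then show ?thesis using that by (auto simp: c_def)
  qed
  have r2: "c u \<noteq> c v" if "u \<in> verts (Gr p r)" "v \<in> verts (Gr p r)" "{u, v} \<in> edges (Gr p r)" for u v
  proof
    assume eq: "c u = c v"
    have g: "gE p r u v" using that edge_Gr by blast
    show False
    proof (cases "u < ?n \<and> v < ?n")
      case True
      then have "u div (p+1) = v div (p+1)" using eq by (simp add: c_def)
      then have "u < v + (p+1)" "v < u + (p+1)" using div_eq_close[of "p+1"] by auto
      then have "near p u v" unfolding near_def by simp
      then show False using g True unfolding gE_def by simp
    next
      case False
      have lo: "c w < 6" if "w < ?n" for w
      proof -
        have "w div (p+1) \<le> (5*p+5) div (p+1)" using that by (intro div_le_mono) simp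
        also have "(5*p+5) div (p+1) = 5" using div5 .
        finally show ?thesis using that by (simp add: c_def)
      qed
      have hi: "c w \<ge> 6" if "\<not> w < ?n" for w using that by (simp add: c_def)
      have inj: "c w \<noteq> c w'" if "\<not> w < ?n" "\<not> w' < ?n" "w \<noteq> w'" for w w'
        using that by (simp add: c_def)
      have "u \<noteq> v" using g unfolding gE_def by simp
      then show False using False eq lo hi inj by (metis not_less)
    qed
  qed
  show ?thesis unfolding colorable_def using r1 r2 by blast
qed

lemma clique_bound:
  assumes sub: "A \<subseteq> {0..<5*p+6}" and cl: "\<forall>x\<in>A. \<forall>y\<in>A. near p x y"
  shows "card A \<le> p+1"
proof (cases "A = {}")
  case True then show ?thesis by simp
next
  case ne: False
  have fin: "finite A" using sub finite_subset by blast
  define a where "a = Min A"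
  have aA: "a \<in> A" using fin ne a_def by simp
  have amin: "\<forall>b\<in>A. a \<le> b" using fin a_def by simp
  show ?thesis
  proof (cases "\<forall>b\<in>A. b \<le> a + p")
    case True
    then have "A \<subseteq> {a..a+p}" using amin by auto
    then have "card A \<le> card {a..a+p}" by (intro card_mono) auto
    then show ?thesis by simp
  next
    case False
    define Bs where "Bs = {b\<in>A. a + p < b}"
    have Bne: "Bs \<noteq> {}" using False Bs_def by auto
    have Bfin: "finite Bs" using fin Bs_def by simp
    define m where "m = Min Bs"
    have mB: "m \<in> Bs" using Bne Bfin m_def by simp
    have mmin: "\<forall>b\<in>Bs. m \<le> b" using Bfin m_def by simp
    have mA: "m \<in> A" and mgt: "a + p < m" using mB Bs_def by auto
    have mn: "m < 5*p+6" using mA sub by auto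
    have an: "a < 5*p+6" using aA sub by auto
    have "near p a m" using cl aA mA by blast
    then have wrap: "a + (5*p+6) \<le> m + p" using mgt mn an unfolding near_def by linarith
    have "A \<subseteq> {m..<5*p+6} \<union> {0..m+p-(5*p+6)}"
    proof
      fix b assume bA: "b \<in> A"
      have bn: "b < 5*p+6" using bA sub by auto
      show "b \<in> {m..<5*p+6} \<union> {0..m+p-(5*p+6)}"
      proof (cases "m \<le> b")
        case True then show ?thesis using bn by simp
      next
        case False
        then have "b \<notin> Bs" using mmin by auto
        then have bl: "b \<le> a + p" using bA Bs_def by auto
        have "near p b m" using cl bA mA by blast
        then have "b + (5*p+6) \<le> m + p" using bl False wrap unfolding near_def by linarith
        then show ?thesis by simp
      qed
    qed
    then have "card A \<le> card ({m..<5*p+6} \<union> {0..m+p-(5*p+6)})" by (intro card_mono) auto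
    also have "\<dots> \<le> card {m..<5*p+6} + card {0..m+p-(5*p+6)}" by (rule card_Un_le)
    also have "\<dots> = p + 1" using wrap mn by simp
    finally show ?thesis .
  qed
qed

lemma nonedge:
  assumes "x \<noteq> y" "x < 5*p+6+r" "y < 5*p+6+r" "\<not> gE p r x y"
  shows "x < 5*p+6 \<and> y < 5*p+6 \<and> near p x y"
  using assms unfolding gE_def by auto

lemma not_col5: "\<not> colorable (Gr p r) (5 + r)"
proof
  assume "colorable (Gr p r) (5 + r)"
  then obtain c where cr: "\<forall>v\<in>{0..<5*p+6+r}. c v < 5 + r"
    and cp: "\<forall>u\<in>{0..<5*p+6+r}. \<forall>v\<in>{0..<5*p+6+r}. {u, v} \<in> edges (Gr p r) \<longrightarrow> c u \<noteq> c v"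
    unfolding colorable_def by auto
  let ?n = "5*p+6"
  have prp: "c u \<noteq> c v" if "u < ?n + r" "v < ?n + r" "gE p r u v" for u v
    using cp that edge_Gr by auto
  define U where "U = {?n..<?n+r}"
  define B where "B = c ` {0..<?n}"
  have injU: "inj_on c U"
    unfolding inj_on_def U_def using prp by (metis atLeastLessThan_iff gE_def)
  have cardU: "card (c ` U) = r" using card_image[OF injU] U_def by simp
  have disj: "B \<inter> c ` U = {}"
    unfolding B_def U_def using prp by (force simp: gE_def)
  have sub: "B \<union> c ` U \<subseteq> {0..<5+r}" unfolding B_def U_def using cr by auto
  have "card (B \<union> c ` U) \<le> 5 + r" using card_mono[OF _ sub] by simp
  moreover have "card (B \<union> c ` U) = card B + card (c ` U)"
    using disj by (intro card_Un_disjoint) (auto simp: B_def U_def)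
  ultimately have cB: "card B \<le> 5" using cardU by simp
  define A where "A j = {v\<in>{0..<?n}. c v = j}" for j
  have cardA: "card (A j) \<le> p + 1" for j
  proof (rule clique_bound)
    show "A j \<subseteq> {0..<5*p+6}" unfolding A_def by auto
    show "\<forall>x\<in>A j. \<forall>y\<in>A j. near p x y"
    proof (intro ballI)
      fix x y assume "x \<in> A j" "y \<in> A j"
      then have xy: "x < ?n" "y < ?n" "c x = c y" unfolding A_def by auto
      show "near p x y"
      proof (cases "x = y")
        case True then show ?thesis unfolding near_def by simp
      next
        case False
        then have "\<not> gE p r x y" using prp xy by auto
        then show ?thesis using nonedge[OF False] xy by auto
      qed
    qed
  qed
  have "{0..<?n} = (\<Union>j\<in>B. A j)" unfolding A_def B_def by auto
  then have "card {0..<?n} \<le> (\<Sum>j\<in>B. card (A j))"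
    using card_UN_le[of B A] B_def by simp
  also have "\<dots> \<le> card B * (p + 1)" using sum_bounded_above[of B "\<lambda>j. card (A j)" "p+1"] cardA by simp
  also have "\<dots> \<le> 5 * (p + 1)" using cB by (intro mult_right_mono) auto
  finally show False by simp
qed

lemma chi_Gr: "chromatic_number (Gr p r) = 6 + r"
  unfolding chromatic_number_def
proof (rule Least_equality)
  show "colorable (Gr p r) (6 + r)" by (rule col_upper)
  fix k assume "colorable (Gr p r) k"
  show "6 + r \<le> k"
  proof (rule ccontr)
    assume "\<not> 6 + r \<le> k"
    then have "k \<le> 5 + r" by simp
    then have "colorable (Gr p r) (5 + r)" using colorable_mono \<open>colorable (Gr p r) k\<close> by blast
    then show False using not_col5 by blast
  qed
qed

lemma del_edge: "{x, y} \<in> edges (delete_vertex (Gr p r) v) \<Longrightarrow> gE p r x y"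
  unfolding delete_vertex_def edges_def using edge_Gr[unfolded edges_def] by auto

lemma del_verts: "verts (delete_vertex (Gr p r) v) = {0..<5*p+6+r} - {v}"
  by (simp add: delete_vertex_def verts_def Gr_def)

lemma colorable_delI:
  assumes "\<forall>u\<in>{0..<5*p+6+r} - {v}. c u < k"
    "\<forall>u\<in>{0..<5*p+6+r} - {v}. \<forall>w\<in>{0..<5*p+6+r} - {v}. gE p r u w \<longrightarrow> c u \<noteq> c w"
  shows "colorable (delete_vertex (Gr p r) v) k"
  unfolding colorable_def del_verts using assms del_edge by blast

lemma del_col:
  assumes vV: "v < 5*p+6+r"
  shows "colorable (delete_vertex (Gr p r) v) (5 + r)"
proof (cases "v < 5*p+6")
  case vl: True
  let ?n = "5*p+6"
  define sh where "sh u = (if v < u then u - v - 1 else u + ?n - v - 1)" for u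
  define c where "c u = (if u < ?n then sh u div (p+1) else u - ?n + 5)" for u
  have lo: "c u < 5" if "u < ?n" "u \<noteq> v" for u
  proof -
    have "sh u < 5 * (p+1)" using that vl unfolding sh_def by auto
    then show ?thesis using that less_mult_imp_div_less unfolding c_def by simp
  qed
  have hi: "c u \<ge> 5" if "\<not> u < ?n" for u using that unfolding c_def by simp
  show ?thesis
  proof (rule colorable_delI)
    show "\<forall>u\<in>{0..<5*p+6+r} - {v}. c u < 5 + r"
    proof
      fix u assume u: "u \<in> {0..<5*p+6+r} - {v}"
      show "c u < 5 + r"
      proof (cases "u < ?n")
        case True then show ?thesis using lo u by fastforce
      next
        case False then show ?thesis using u unfolding c_def by auto
      qed
    qed
    show "\<forall>u\<in>{0..<5*p+6+r} - {v}. \<forall>w\<in>{0..<5*p+6+r} - {v}. gE p r u w \<longrightarrow> c u \<noteq> c w"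
    proof (intro ballI impI)
      fix u w assume u: "u \<in> {0..<5*p+6+r} - {v}" and w: "w \<in> {0..<5*p+6+r} - {v}" and g: "gE p r u w"
      show "c u \<noteq> c w"
      proof
        assume eq: "c u = c w"
        show False
        proof (cases "u < ?n \<and> w < ?n")
          case True
          then have "sh u div (p+1) = sh w div (p+1)" using eq unfolding c_def by simp
          then have "sh u < sh w + (p+1)" "sh w < sh u + (p+1)" using div_eq_close[of "p+1"] by auto
          moreover have su: "sh u + v + 1 = (if v < u then u else u + ?n)" using True vl u unfolding sh_def by auto
          moreover have sw: "sh w + v + 1 = (if v < w then w else w + ?n)" using True vl w unfolding sh_def by auto
          ultimately have "near p u w" unfolding near_def
            by (cases "v < u"; cases "v < w"; simp; linarith)
          then show False using g True unfolding gE_def by simp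
        next
          case False
          have uw: "u \<noteq> w" using g unfolding gE_def by simp
          have uv: "u \<noteq> v" "w \<noteq> v" using u w by auto
          show False
          proof (cases "u < ?n")
            case True
            then have "\<not> w < ?n" using False by simp
            then show False using lo[OF True uv(1)] hi eq by fastforce
          next
            case uh: False
            show False
            proof (cases "w < ?n")
              case True
              then show False using lo[OF True uv(2)] hi[OF uh] eq by simp
            next
              case False
              then show False using uh eq uw unfolding c_def by simp
            qed
          qed
        qed
      qed
    qed
  qed
next
  case vh: False
  let ?n = "5*p+6"
  define c where "c u = (if u < ?n then u div (p+1) else if u < v then u - ?n + 6 else u - ?n + 5)" for u
  have lo: "c u < 6" if "u < ?n" for u
  proof -
    have "u < 6 * (p+1)" using that by simp
    then show ?thesis using that less_mult_imp_div_less unfolding c_def by simp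
  qed
  show ?thesis
  proof (rule colorable_delI)
    show "\<forall>u\<in>{0..<5*p+6+r} - {v}. c u < 5 + r"
    proof
      fix u assume u: "u \<in> {0..<5*p+6+r} - {v}"
      show "c u < 5 + r"
      proof (cases "u < ?n")
        case True then show ?thesis using lo[OF True] vh vV by linarith
      next
        case False then show ?thesis using u vV unfolding c_def by auto
      qed
    qed
    show "\<forall>u\<in>{0..<5*p+6+r} - {v}. \<forall>w\<in>{0..<5*p+6+r} - {v}. gE p r u w \<longrightarrow> c u \<noteq> c w"
    proof (intro ballI impI)
      fix u w assume u: "u \<in> {0..<5*p+6+r} - {v}" and w: "w \<in> {0..<5*p+6+r} - {v}" and g: "gE p r u w"
      show "c u \<noteq> c w"
      proof
        assume eq: "c u = c w"
        show False
        proof (cases "u < ?n \<and> w < ?n")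
          case True
          then have "u div (p+1) = w div (p+1)" using eq unfolding c_def by simp
          then have "u < w + (p+1)" "w < u + (p+1)" using div_eq_close[of "p+1"] by auto
          then have "near p u w" unfolding near_def by simp
          then show False using g True unfolding gE_def by simp
        next
          case False
          have uw: "u \<noteq> w" using g unfolding gE_def by simp
          have "u \<noteq> v" "w \<noteq> v" using u w by auto
          show False
          proof (cases "u < ?n")
            case True
            then have "\<not> w < ?n" using False by simp
            then have "c w \<ge> 6" using \<open>w \<noteq> v\<close> vh unfolding c_def by auto
            then show False using lo[OF True] eq by simp
          next
            case uh: False
            show False
            proof (cases "w < ?n")
              case True
              then have "c u \<ge> 6" using \<open>u \<noteq> v\<close> vh uh unfolding c_def by auto
              then show False using lo[OF True] eq by simp
            next
              case False
              then show False using uh eq uw \<open>u \<noteq> v\<close> \<open>w \<noteq> v\<close> vh unfolding c_def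
                by (auto split: if_splits)
            qed
          qed
        qed
      qed
    qed
  qed
qed

lemma crit_Gr: "vertex_critical (6 + r) (Gr p r)"
  unfolding vertex_critical_def
proof (intro conjI ballI)
  show "is_graph (Gr p r)" by (rule is_graph_Gr)
  show "chromatic_number (Gr p r) = 6 + r" by (rule chi_Gr)
  fix v assume "v \<in> verts (Gr p r)"
  then have "colorable (delete_vertex (Gr p r) v) (5 + r)" using del_col by simp
  then have "chromatic_number (delete_vertex (Gr p r) v) \<le> 5 + r"
    unfolding chromatic_number_def by (rule Least_le)
  then show "chromatic_number (delete_vertex (Gr p r) v) < 6 + r" by simp
qed

lemma P5_verts: "verts P5 = {0..<5}" by (simp add: P5_def verts_def)
lemma C5_verts: "verts C5 = {0..<5}" by (simp add: C5_def verts_def)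

lemma P5_e: "{0::nat,1} \<in> edges P5" "{3::nat,4} \<in> edges P5"
  "{0::nat,3} \<notin> edges P5" "{0::nat,4} \<notin> edges P5" "{1::nat,3} \<notin> edges P5" "{1::nat,4} \<notin> edges P5"
  unfolding P5_def edges_def by (auto simp: doubleton_eq_iff)

lemma C5_e: "{0::nat,1} \<in> edges C5" "{1::nat,2} \<in> edges C5" "{2::nat,3} \<in> edges C5"
  "{3::nat,4} \<in> edges C5" "{4::nat,0} \<in> edges C5"
  "{0::nat,2} \<notin> edges C5" "{1::nat,3} \<notin> edges C5" "{2::nat,4} \<notin> edges C5"
  "{3::nat,0} \<notin> edges C5" "{4::nat,1} \<notin> edges C5"
  unfolding C5_def edges_def by (auto simp: doubleton_eq_iff)

lemma P5_free_Gr: "H_free P5 (Gr p r)"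
  unfolding H_free_def induced_sub_def P5_verts
proof
  assume "\<exists>f. inj_on f {0..<5::nat} \<and> f ` {0..<5} \<subseteq> verts (Gr p r) \<and>
     (\<forall>u\<in>{0..<5}. \<forall>v\<in>{0..<5}. ({f u, f v} \<in> edges (Gr p r)) = ({u, v} \<in> edges P5))"
  then obtain f where inj: "inj_on f {0..<5::nat}" and im: "f ` {0..<5} \<subseteq> {0..<5*p+6+r}"
    and ed: "\<forall>u\<in>{0..<5}. \<forall>v\<in>{0..<5}. gE p r (f u) (f v) = ({u, v} \<in> edges P5)"
    by (auto simp: edge_Gr)
  have lt: "f i < 5*p+6+r" if "i < 5" for i using im that by (auto simp: image_subset_iff)
  have ne: "f i \<noteq> f j" if "i < 5" "j < 5" "i \<noteq> j" for i j
    using inj that unfolding inj_on_def by auto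
  have e01: "gE p r (f 0) (f 1)" using ed P5_e by simp
  have e34: "gE p r (f 3) (f 4)" using ed P5_e by simp
  have n03: "\<not> gE p r (f 0) (f 3)" using ed P5_e by simp
  have n04: "\<not> gE p r (f 0) (f 4)" using ed P5_e by simp
  have n13: "\<not> gE p r (f 1) (f 3)" using ed P5_e by simp
  have n14: "\<not> gE p r (f 1) (f 4)" using ed P5_e by simp
  have a03: "f 0 < 5*p+6 \<and> f 3 < 5*p+6 \<and> near p (f 0) (f 3)" using nonedge[OF ne lt lt n03] by simp
  have a04: "f 0 < 5*p+6 \<and> f 4 < 5*p+6 \<and> near p (f 0) (f 4)" using nonedge[OF ne lt lt n04] by simp
  have a13: "f 1 < 5*p+6 \<and> f 3 < 5*p+6 \<and> near p (f 1) (f 3)" using nonedge[OF ne lt lt n13] by simp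
  have a14: "f 1 < 5*p+6 \<and> f 4 < 5*p+6 \<and> near p (f 1) (f 4)" using nonedge[OF ne lt lt n14] by simp
  have "\<not> near p (f 0) (f 1)" using e01 a03 a13 unfolding gE_def by simp
  moreover have "\<not> near p (f 3) (f 4)" using e34 a03 a14 unfolding gE_def by simp
  moreover have "f 0 \<noteq> f 1" "f 3 \<noteq> f 4" using ne by auto
  ultimately show False using no2K2[of "f 0" p "f 1" "f 3" "f 4"] a03 a04 a13 a14 by blast
qed

lemma C5_free_Gr: "H_free C5 (Gr p r)"
  unfolding H_free_def induced_sub_def C5_verts
proof
  assume "\<exists>f. inj_on f {0..<5::nat} \<and> f ` {0..<5} \<subseteq> verts (Gr p r) \<and>
     (\<forall>u\<in>{0..<5}. \<forall>v\<in>{0..<5}. ({f u, f v} \<in> edges (Gr p r)) = ({u, v} \<in> edges C5))"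
  then obtain f where inj: "inj_on f {0..<5::nat}" and im: "f ` {0..<5} \<subseteq> {0..<5*p+6+r}"
    and ed: "\<forall>u\<in>{0..<5}. \<forall>v\<in>{0..<5}. gE p r (f u) (f v) = ({u, v} \<in> edges C5)"
    by (auto simp: edge_Gr)
  have lt: "f i < 5*p+6+r" if "i < 5" for i using im that by (auto simp: image_subset_iff)
  have ne: "f i \<noteq> f j" if "i < 5" "j < 5" "i \<noteq> j" for i j
    using inj that unfolding inj_on_def by auto
  have e: "gE p r (f 0) (f 1)" "gE p r (f 1) (f 2)" "gE p r (f 2) (f 3)" "gE p r (f 3) (f 4)" "gE p r (f 4) (f 0)"
    using ed C5_e by simp_all
  have n: "\<not> gE p r (f 0) (f 2)" "\<not> gE p r (f 1) (f 3)" "\<not> gE p r (f 2) (f 4)" "\<not> gE p r (f 3) (f 0)" "\<not> gE p r (f 4) (f 1)"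
    using ed C5_e by simp_all
  have a02: "f 0 < 5*p+6 \<and> f 2 < 5*p+6 \<and> near p (f 0) (f 2)" using nonedge[OF ne lt lt n(1)] by simp
  have a13: "f 1 < 5*p+6 \<and> f 3 < 5*p+6 \<and> near p (f 1) (f 3)" using nonedge[OF ne lt lt n(2)] by simp
  have a24: "f 2 < 5*p+6 \<and> f 4 < 5*p+6 \<and> near p (f 2) (f 4)" using nonedge[OF ne lt lt n(3)] by simp
  have a30: "f 3 < 5*p+6 \<and> f 0 < 5*p+6 \<and> near p (f 3) (f 0)" using nonedge[OF ne lt lt n(4)] by simp
  have a41: "f 4 < 5*p+6 \<and> f 1 < 5*p+6 \<and> near p (f 4) (f 1)" using nonedge[OF ne lt lt n(5)] by simp
  have "\<not> near p (f 0) (f 1)" "\<not> near p (f 1) (f 2)" "\<not> near p (f 2) (f 3)" "\<not> near p (f 3) (f 4)" "\<not> near p (f 4) (f 0)"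
    using e a02 a13 a24 a30 a41 unfolding gE_def by simp_all
  then show False using noC5[of "f 0" p "f 1" "f 2" "f 3" "f 4"] a02 a13 a24 a30 a41 by blast
qed

lemma iso_Gr: "graph_iso (Gr p r) (Gr q r) \<Longrightarrow> p = q"
  unfolding graph_iso_def using bij_betw_same_card by fastforce

theorem corollary2p8:
  fixes k :: nat
  assumes "k \<ge> 6"
  shows "\<exists>S :: nat sgraph set. infinite S \<and>
    (\<forall>G\<in>S. vertex_critical k G \<and> H_free P5 G \<and> H_free C5 G) \<and>
    (\<forall>G\<in>S. \<forall>H\<in>S. G \<noteq> H \<longrightarrow> \<not> graph_iso G H)"
proof -
  define r where "r = k - 6"
  have k: "k = 6 + r" using assms r_def by simp
  define S where "S = range (\<lambda>p. Gr p r)"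
  have inj: "inj (\<lambda>p. Gr p r)"
  proof (rule injI)
    fix p q assume "Gr p r = Gr q r"
    then have "verts (Gr p r) = verts (Gr q r)" by simp
    then have "card {0..<5*p+6+r} = card {0..<5*q+6+r}" by simp
    then show "p = q" by simp
  qed
  have "infinite S"
  proof
    assume "finite S"
    then have "finite (UNIV :: nat set)" using finite_imageD[OF _ inj] S_def by simp
    then show False by simp
  qed
  moreover have "\<forall>G\<in>S. vertex_critical k G \<and> H_free P5 G \<and> H_free C5 G"
    unfolding S_def k using crit_Gr P5_free_Gr C5_free_Gr by blast
  moreover have "\<forall>G\<in>S. \<forall>H\<in>S. G \<noteq> H \<longrightarrow> \<not> graph_iso G H"
    unfolding S_def using iso_Gr by blast
  ultimately show ?thesis by blast
qed

end
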